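(* Let $C=\{c_1,\dots,c_m\}$ and let $\mathcal{T}=\mathrm{CP}(c_1,\dots,c_m)$. Given a vote $v$ over $C$, let $\widehat{v}$ be the vote over $C$ such that, for each $j\in[m]$, if $c_j$ is ranked in position $i$ in $v$, then $c_i$ is ranked in position $m-j+1$ in $\widehat{v}$. If $v$ is in the support of $\mathcal{D}_{\mathrm{GS}}^{\mathcal{T}}$, then $\widehat{v}$ is single-peaked with respect to the axis $c_1\lhd c_2\lhd\dots\lhd c_m$.
   Context: A vote over $C$ is a total order on $C$ (position 1 is the top). $\mathrm{CP}(c_1,\dots,c_m)$ is the rooted ordered binary caterpillar tree with internal nodes $x_1,\dots,x_{m-1}$ (root $x_1$), where for $j\in[m-2]$ node $x_j$ has left child $c_j$ and right child $x_{j+1}$, and $x_{m-1}$ has children $c_{m-1}$ (left) and $c_m$ (right). A vote is consistent with $\mathcal{T}$ if it equals the left-to-right order of leaves of the tree obtained by reversing the order of children of some set of internal nodes; $\mathcal{D}_{\mathrm{GS}}^{\mathcal{T}}$ is the uniform distribution over votes consistent with $\mathcal{T}$, so its support is the set of consistent votes. A vote $v$ is single-peaked with respect to an axis (a linear order $\lhd$ of $C$) if for every $t\in[m]$ the $t$ top-ranked candidates of $v$ form an interval of $\lhd$. *)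

theory Defs
  imports Main
begin

datatype 'a btree = Leaf 'a | Node "'a btree" "'a btree"

text \<open>Caterpillar tree CP(c_1,...,c_m): node x_j has left child c_j and right child x_{j+1};
the last internal node has children c_{m-1} (left) and c_m (right).
(For a single candidate we return the leaf; the theorem assumes m >= 2.)\<close>
fun caterpillar :: "'a list \<Rightarrow> 'a btree" where
  "caterpillar [] = undefined"
| "caterpillar [c] = Leaf c"
| "caterpillar (c # d # cs) = Node (Leaf c) (caterpillar (d # cs))"

text \<open>Internal nodes are identified by their path from the root (False = left, True = right).
leaves_flip S p t is the left-to-right leaf order of subtree t (located at path p) after
reversing the children of every internal node whose path lies in S.\<close>
fun leaves_flip :: "bool list set \<Rightarrow> bool list \<Rightarrow> 'a btree \<Rightarrow> 'a list" where
  "leaves_flip S p (Leaf c) = [c]"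
| "leaves_flip S p (Node l r) =
     (if p \<in> S then leaves_flip S (p @ [True]) r @ leaves_flip S (p @ [False]) l
      else leaves_flip S (p @ [False]) l @ leaves_flip S (p @ [True]) r)"

text \<open>A vote is consistent with T if it is the leaf order of T after reversing the children
of some set of internal nodes. The support of D_GS^T is exactly the set of consistent votes.\<close>
definition consistent_with :: "'a btree \<Rightarrow> 'a list \<Rightarrow> bool" where
  "consistent_with T v \<longleftrightarrow> (\<exists>S. v = leaves_flip S [] T)"

definition gs_support :: "'a btree \<Rightarrow> 'a list set" where
  "gs_support T = {v. consistent_with T v}"

text \<open>Votes over C are lists: a vote is a distinct list enumerating C, position 1 = head.\<close>
definition is_vote :: "'a set \<Rightarrow> 'a list \<Rightarrow> bool" where
  "is_vote C v \<longleftrightarrow> distinct v \<and> set v = C"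

text \<open>Interval of the axis (given as a list, first element leftmost).\<close>
definition axis_interval :: "'a list \<Rightarrow> 'a set \<Rightarrow> bool" where
  "axis_interval ax S \<longleftrightarrow> (\<exists>a b. a \<le> b \<and> b < length ax \<and> S = {ax ! k | k. a \<le> k \<and> k \<le> b})"

definition single_peaked :: "'a list \<Rightarrow> 'a list \<Rightarrow> bool" where
  "single_peaked ax v \<longleftrightarrow> (\<forall>t. 1 \<le> t \<and> t \<le> length v \<longrightarrow> axis_interval ax (set (take t v)))"

definition pos :: "'a list \<Rightarrow> 'a \<Rightarrow> nat" where
  "pos v x = (LEAST i. i < length v \<and> v ! i = x)"

text \<open>hat v: if c_j is in position i of v then c_i is in position m-j+1 of hat v
(1-based). In 0-based indices: if v!i = cs!j then (hat v)!(m-1-j) = cs!i, i.e.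
(hat v)!k = cs ! (pos v (cs ! (m-1-k))).\<close>
definition hat_vote :: "'a list \<Rightarrow> 'a list \<Rightarrow> 'a list" where
  "hat_vote cs v = map (\<lambda>k. cs ! pos v (cs ! (length cs - 1 - k))) [0..<length cs]"

end

theory Submission
  imports Defs
begin

definition blockQ :: "'a list \<Rightarrow> 'a list \<Rightarrow> bool" where
  "blockQ cs v \<longleftrightarrow> length v = length cs \<and>
     (\<forall>j<length cs. \<exists>a. a + (length cs - j) \<le> length v \<and>
        set (drop j cs) = set (take (length cs - j) (drop a v)))"

lemma blockQ_step:
  assumes Q: "blockQ (d # cs) w" and v: "v = c # w \<or> v = w @ [c]"
  shows "blockQ (c # d # cs) v"
  unfolding blockQ_def
proof (intro conjI allI impI)
  have lw: "length w = length (d # cs)" using Q by (simp add: blockQ_def)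
  have "\<forall>j<length (d#cs). \<exists>a. a + (length (d#cs) - j) \<le> length w \<and>
        set (drop j (d#cs)) = set (take (length (d#cs) - j) (drop a w))"
    using Q unfolding blockQ_def by blast
  then obtain a0 where a0: "a0 + (length (d#cs) - 0) \<le> length w"
    "set (drop 0 (d#cs)) = set (take (length (d#cs) - 0) (drop a0 w))"
    by (meson length_greater_0_conv list.simps(3))
  have "a0 = 0" using a0(1) lw by simp
  then have sw: "set w = set (d # cs)" using a0(2) lw by simp
  show "length v = length (c # d # cs)" using v lw by auto
  fix j assume j: "j < length (c # d # cs)"
  show "\<exists>a. a + (length (c # d # cs) - j) \<le> length v \<and>
          set (drop j (c # d # cs)) = set (take (length (c # d # cs) - j) (drop a v))"
  proof (cases j)
    case 0
    have "v = c # w \<or> v = w @ [c]" by (fact v)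
    then show ?thesis
    proof
      assume "v = c # w" then show ?thesis using sw lw 0 by (intro exI[of _ 0]) simp
    next
      assume "v = w @ [c]" then show ?thesis using sw lw 0 by (intro exI[of _ 0]) (simp add: insert_commute)
    qed
  next
    case (Suc j')
    then have "j' < length (d # cs)" using j by simp
    then obtain a where a: "a + (length (d#cs) - j') \<le> length w"
      "set (drop j' (d # cs)) = set (take (length (d#cs) - j') (drop a w))"
      using Q unfolding blockQ_def by blast
    show ?thesis
    proof (cases "v = c # w")
      case True
      have e: "length (c # d # cs) - j = length (d#cs) - j'" using Suc by simp
      show ?thesis unfolding e True using a Suc lw by (intro exI[of _ "Suc a"]) simp
    next
      case False
      then have vv: "v = w @ [c]" using v by blast
      have "take (length (d#cs) - j') (drop a (w @ [c])) = take (length (d#cs) - j') (drop a w)"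
        using a(1) by simp
      have e: "length (c # d # cs) - j = length (d#cs) - j'" using Suc by simp
      show ?thesis unfolding e vv using a Suc lw by (intro exI[of _ a]) simp
    qed
  qed
qed

lemma blockQ_leaves:
  "cs \<noteq> [] \<Longrightarrow> blockQ cs (leaves_flip S p (caterpillar cs))"
proof (induction cs arbitrary: p rule: caterpillar.induct)
  case 1
  then show ?case by simp
next
  case (2 c)
  then show ?case by (auto simp: blockQ_def)
next
  case (3 c d cs)
  then show ?case
    by (intro blockQ_step[where w="leaves_flip S (p @ [True]) (caterpillar (d # cs))"]) auto
qed

lemma pos_nth:
  assumes "distinct v" "i < length v"
  shows "pos v (v ! i) = i"
  unfolding pos_def
  using assms by (intro Least_equality) (auto simp: nth_eq_iff_index_eq)

lemma pos_in:
  assumes "x \<in> set v"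
  shows "pos v x < length v \<and> v ! pos v x = x"
proof -
  have "\<exists>i. i < length v \<and> v ! i = x" using assms by (simp add: in_set_conv_nth)
  then show ?thesis unfolding pos_def by (rule LeastI_ex)
qed

theorem theorem3:
  fixes cs :: "'a list" and v :: "'a list"
  assumes "distinct cs" and "length cs \<ge> 2"
    and "is_vote (set cs) v"
    and "v \<in> gs_support (caterpillar cs)"
  shows "is_vote (set cs) (hat_vote cs v) \<and> single_peaked cs (hat_vote cs v)"
proof -
  define m where "m = length cs"
  have dv: "distinct v" and sv: "set v = set cs" using assms(3) by (auto simp: is_vote_def)
  have lv: "length v = m" unfolding m_def using dv sv assms(1)
    by (metis distinct_card)
  obtain S where vS: "v = leaves_flip S [] (caterpillar cs)"
    using assms(4) by (auto simp: gs_support_def consistent_with_def)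
  have "cs \<noteq> []" using assms(2) by auto
  then have Q: "blockQ cs v" unfolding vS by (rule blockQ_leaves)
  define f where "f k = pos v (cs ! (m - 1 - k))" for k
  define g where "g k = cs ! f k" for k
  have hat: "hat_vote cs v = map g [0..<m]"
    unfolding hat_vote_def g_def f_def m_def by simp
  have fk: "f k < m \<and> v ! f k = cs ! (m - 1 - k)" if "k < m" for k
  proof -
    have "cs ! (m - 1 - k) \<in> set v" using that sv m_def by auto
    then show ?thesis using pos_in lv f_def by metis
  qed
  have inj: "inj_on g {0..<m}"
  proof (rule inj_onI)
    fix k1 k2 assume k: "k1 \<in> {0..<m}" "k2 \<in> {0..<m}" "g k1 = g k2"
    then have "f k1 = f k2" using fk assms(1) m_def g_def by (simp add: nth_eq_iff_index_eq)
    moreover have "k1 < m" "k2 < m" using k by auto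
    ultimately have "cs ! (m - 1 - k1) = cs ! (m - 1 - k2)" using fk by metis
    then have "m - 1 - k1 = m - 1 - k2" using assms(1) k m_def by (simp add: nth_eq_iff_index_eq)
    then show "k1 = k2" using k by auto
  qed
  have d: "distinct (hat_vote cs v)" using inj hat by (simp add: distinct_map)
  have sub: "set (hat_vote cs v) \<subseteq> set cs" using hat fk g_def m_def by auto
  have "card (set (hat_vote cs v)) = m" using distinct_card[OF d] hat by simp
  then have seq: "set (hat_vote cs v) = set cs"
    using sub assms(1) m_def by (metis card_subset_eq distinct_card finite_set)
  have sp: "single_peaked cs (hat_vote cs v)"
    unfolding single_peaked_def
  proof (intro allI impI)
    fix t assume t: "1 \<le> t \<and> t \<le> length (hat_vote cs v)"
    then have tm: "1 \<le> t" "t \<le> m" using hat by auto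
    define j where "j = m - t"
    have "j < length cs" using tm j_def m_def by auto
    then obtain a where a: "a + t \<le> m" "set (drop j cs) = set (take t (drop a v))"
      using Q unfolding blockQ_def j_def m_def using tm m_def lv by (metis diff_diff_cancel)
    have st: "set (take t (hat_vote cs v)) = g ` {0..<t}"
      using hat tm by (simp add: take_map)
    have fimg: "f ` {0..<t} = {a..<a+t}"
    proof
      show "f ` {0..<t} \<subseteq> {a..<a+t}"
      proof
        fix y assume "y \<in> f ` {0..<t}"
        then obtain k where k: "k < t" "y = f k" by auto
        have "cs ! (m - 1 - k) = drop j cs ! (m - 1 - k - j)"
          using k tm j_def m_def by simp
        moreover have "m - 1 - k - j < length (drop j cs)" using k tm j_def m_def by auto
        ultimately have "cs ! (m - 1 - k) \<in> set (take t (drop a v))"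
          using a(2) by (metis nth_mem)
        then obtain i where i: "i < length (take t (drop a v))" "take t (drop a v) ! i = cs ! (m - 1 - k)"
          by (metis in_set_conv_nth)
        have "v ! (a + i) = cs ! (m - 1 - k)" "i < t" "a + i < m" using i a lv by auto
        then have "f k = a + i" using pos_nth[OF dv, of "a+i"] lv f_def by metis
        then show "y \<in> {a..<a+t}" using k \<open>i < t\<close> by auto
      qed
    next
      show "{a..<a+t} \<subseteq> f ` {0..<t}"
      proof
        fix i assume i: "i \<in> {a..<a+t}"
        then have "v ! i = take t (drop a v) ! (i - a)" using a lv by auto
        moreover have "i - a < length (take t (drop a v))" using i a lv by auto
        ultimately have "v ! i \<in> set (drop j cs)" using a(2) by (metis nth_mem)
        then obtain r where r: "r < length (drop j cs)" "drop j cs ! r = v ! i"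
          by (metis in_set_conv_nth)
        have rt: "r < t" "j + r < m" using r j_def m_def tm by auto
        define k where "k = t - 1 - r"
        have "m - 1 - k = j + r" using k_def rt j_def tm by auto
        then have "cs ! (m - 1 - k) = v ! i" using r rt m_def by simp
        then have "f k = i" using pos_nth[OF dv, of i] i a lv f_def by auto
        moreover have "k < t" using k_def rt by auto
        ultimately show "i \<in> f ` {0..<t}" by auto
      qed
    qed
    have "g ` {0..<t} = {cs ! k | k. a \<le> k \<and> k \<le> a + t - 1}"
    proof -
      have "g ` {0..<t} = (\<lambda>i. cs ! i) ` (f ` {0..<t})" unfolding g_def by auto
      also have "\<dots> = (\<lambda>i. cs ! i) ` {a..<a+t}" using fimg by simp
      also have "\<dots> = {cs ! k | k. a \<le> k \<and> k \<le> a + t - 1}" using tm by (auto; force)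
      finally show ?thesis .
    qed
    then show "axis_interval cs (set (take t (hat_vote cs v)))"
      unfolding axis_interval_def st using tm a m_def
      by (intro exI[of _ a] exI[of _ "a + t - 1"]) auto
  qed
  show ?thesis using d seq sp by (simp add: is_vote_def)
qed

end
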